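(* Let $S$ be a semigroup with an ideal $I$, and let $\alpha_1,\dots,\alpha_n$ be congruences of $S$ with $\alpha_j\le\rho_I$ for all $j$. Then $[\alpha_1,\dots,\alpha_n]_S$ is the congruence of $S$ generated by $[\alpha_1|_I,\dots,\alpha_n|_I]_I$ (the commutator computed in the semigroup $I$ of the restricted congruences $\alpha_j|_I=\alpha_j\cap(I\times I)$).
   Context: For an ideal $I$ of $S$, the Rees congruence is $\rho_I=(I\times I)\cup\{(s,s):s\in S\}$. For an algebra $\mathbf A$ and congruences $\alpha_1,\dots,\alpha_n$, $M_{\mathbf A}(\alpha_1,\dots,\alpha_n)$ is the subalgebra of $\mathbf A^{\{0,1\}^n}$ generated by all $g$ such that for some $i$ and $(a,b)\in\alpha_i$, $g(x)=a$ if $x_i=0$ and $g(x)=b$ if $x_i=1$; the commutator $[\alpha_1,\dots,\alpha_n]_{\mathbf A}$ is the smallest congruence $\delta$ of $\mathbf A$ such that for all $f\in M_{\mathbf A}(\alpha_1,\dots,\alpha_n)$: if $(f(x0),f(x1))\in\delta$ for all $x\in\{0,1\}^{n-1}\setminus\{(1,\dots,1)\}$, then $(f(1,\dots,1,0),f(1,\dots,1,1))\in\delta$. *)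

theory Defs
  imports Main
begin

text \<open>Relative versions allow treating an ideal
  I of S as a semigroup with the restricted operation.\<close>

definition semigroup_on :: "'a set \<Rightarrow> ('a \<Rightarrow> 'a \<Rightarrow> 'a) \<Rightarrow> bool" where
  "semigroup_on S mul \<longleftrightarrow>
     (\<forall>a\<in>S. \<forall>b\<in>S. mul a b \<in> S) \<and>
     (\<forall>a\<in>S. \<forall>b\<in>S. \<forall>c\<in>S. mul (mul a b) c = mul a (mul b c))"

definition ideal_on :: "'a set \<Rightarrow> ('a \<Rightarrow> 'a \<Rightarrow> 'a) \<Rightarrow> 'a set \<Rightarrow> bool" where
  "ideal_on S mul I \<longleftrightarrow> I \<subseteq> S \<and> I \<noteq> {} \<and>
     (\<forall>s\<in>S. \<forall>i\<in>I. mul s i \<in> I \<and> mul i s \<in> I)"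

definition congruence_on :: "'a set \<Rightarrow> ('a \<Rightarrow> 'a \<Rightarrow> 'a) \<Rightarrow> 'a rel \<Rightarrow> bool" where
  "congruence_on A mul \<theta> \<longleftrightarrow> equiv A \<theta> \<and>
     (\<forall>a b c d. (a, b) \<in> \<theta> \<longrightarrow> (c, d) \<in> \<theta> \<longrightarrow> (mul a c, mul b d) \<in> \<theta>)"

definition rees :: "'a set \<Rightarrow> 'a set \<Rightarrow> 'a rel" where
  "rees S I = (I \<times> I) \<union> Id_on S"

definition Cg :: "'a set \<Rightarrow> ('a \<Rightarrow> 'a \<Rightarrow> 'a) \<Rightarrow> 'a rel \<Rightarrow> 'a rel" where
  "Cg A mul R = \<Inter>{\<theta>. congruence_on A mul \<theta> \<and> R \<subseteq> \<theta>}"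

text \<open>Elements of {0,1}^n are boolean lists of length n (False = 0, True = 1);
  congruences alpha_1..alpha_n are indexed as al 0, ..., al (n-1).
  M_A(al_1..al_n) is the set of functions bool list => 'a generated (under the
  pointwise operation) by the functions x |-> (if x!i then b else a), (a,b) in al i.
  Only their values on the cube {0,1}^n matter.\<close>
inductive_set Mset :: "('a \<Rightarrow> 'a \<Rightarrow> 'a) \<Rightarrow> (nat \<Rightarrow> 'a rel) \<Rightarrow> nat \<Rightarrow> (bool list \<Rightarrow> 'a) set"
  for mul :: "'a \<Rightarrow> 'a \<Rightarrow> 'a" and al :: "nat \<Rightarrow> 'a rel" and n :: nat where
  gen: "i < n \<Longrightarrow> (a, b) \<in> al i \<Longrightarrow> (\<lambda>x. if x ! i then b else a) \<in> Mset mul al n"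
| prod: "g \<in> Mset mul al n \<Longrightarrow> h \<in> Mset mul al n \<Longrightarrow> (\<lambda>x. mul (g x) (h x)) \<in> Mset mul al n"

definition comm_closed :: "('a \<Rightarrow> 'a \<Rightarrow> 'a) \<Rightarrow> (nat \<Rightarrow> 'a rel) \<Rightarrow> nat \<Rightarrow> 'a rel \<Rightarrow> bool" where
  "comm_closed mul al n \<delta> \<longleftrightarrow>
     (\<forall>g\<in>Mset mul al n.
        (\<forall>x. length x = n - 1 \<and> x \<noteq> replicate (n - 1) True \<longrightarrow>
              (g (x @ [False]), g (x @ [True])) \<in> \<delta>) \<longrightarrow>
        (g (replicate (n - 1) True @ [False]), g (replicate (n - 1) True @ [True])) \<in> \<delta>)"

definition commutator :: "'a set \<Rightarrow> ('a \<Rightarrow> 'a \<Rightarrow> 'a) \<Rightarrow> (nat \<Rightarrow> 'a rel) \<Rightarrow> nat \<Rightarrow> 'a rel" where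
  "commutator A mul al n = \<Inter>{\<delta>. congruence_on A mul \<delta> \<and> comm_closed mul al n \<delta>}"

end

theory Submission
  imports Defs
begin

lemma cong_Inter:
  assumes "F \<noteq> {}" "\<forall>\<theta>\<in>F. congruence_on A mul \<theta>"
  shows "congruence_on A mul (\<Inter>F)"
proof -
  have e: "\<forall>\<theta>\<in>F. equiv A \<theta>" and c: "\<forall>\<theta>\<in>F. \<forall>a b c d. (a, b) \<in> \<theta> \<longrightarrow> (c, d) \<in> \<theta> \<longrightarrow> (mul a c, mul b d) \<in> \<theta>"
    using assms(2) unfolding congruence_on_def by auto
  have "equiv A (\<Inter>F)"
  proof (rule equivI)
    obtain \<theta> where th: "\<theta> \<in> F" using assms(1) by blast
    have "\<Inter>F \<subseteq> \<theta>" using th by blast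
    moreover have "\<theta> \<subseteq> A \<times> A" using e th unfolding equiv_def refl_on_def by blast
    moreover have "\<forall>x\<in>A. (x, x) \<in> \<Inter>F" using e unfolding equiv_def refl_on_def by blast
    ultimately show "\<Inter>F \<subseteq> A \<times> A" "refl_on A (\<Inter>F)" unfolding refl_on_def by blast+
    show "sym (\<Inter>F)" using e unfolding equiv_def sym_def by blast
    show "trans (\<Inter>F)" using e unfolding equiv_def trans_def by blast
  qed
  moreover have "\<forall>a b c d. (a, b) \<in> \<Inter>F \<longrightarrow> (c, d) \<in> \<Inter>F \<longrightarrow> (mul a c, mul b d) \<in> \<Inter>F"
    using c by blast
  ultimately show ?thesis unfolding congruence_on_def by blast
qed

lemma cc_Inter:
  assumes "\<forall>\<delta>\<in>F. comm_closed mul al n \<delta>"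
  shows "comm_closed mul al n (\<Inter>F)"
  using assms unfolding comm_closed_def by blast

lemma Mset_vals:
  assumes "g \<in> Mset mul al n" "\<forall>j<n. al j \<subseteq> A \<times> A" "\<forall>a\<in>A. \<forall>b\<in>A. mul a b \<in> A"
  shows "g x \<in> A"
  using assms by (induction rule: Mset.induct) auto

lemma cong_refl: "congruence_on A mul \<theta> \<Longrightarrow> a \<in> A \<Longrightarrow> (a, a) \<in> \<theta>"
  unfolding congruence_on_def equiv_def refl_on_def by blast

lemma cong_sub: "congruence_on A mul \<theta> \<Longrightarrow> \<theta> \<subseteq> A \<times> A"
  unfolding congruence_on_def equiv_def refl_on_def by blast

lemma cong_sym: "congruence_on A mul \<theta> \<Longrightarrow> (a, b) \<in> \<theta> \<Longrightarrow> (b, a) \<in> \<theta>"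
  unfolding congruence_on_def equiv_def sym_def by blast

lemma cong_trans: "congruence_on A mul \<theta> \<Longrightarrow> (a, b) \<in> \<theta> \<Longrightarrow> (b, c) \<in> \<theta> \<Longrightarrow> (a, c) \<in> \<theta>"
  unfolding congruence_on_def equiv_def trans_def by blast

lemma cong_comp: "congruence_on A mul \<theta> \<Longrightarrow> (a, b) \<in> \<theta> \<Longrightarrow> (c, d) \<in> \<theta> \<Longrightarrow> (mul a c, mul b d) \<in> \<theta>"
  unfolding congruence_on_def by blast

lemma full_cong:
  assumes "\<forall>a\<in>A. \<forall>b\<in>A. mul a b \<in> A"
  shows "congruence_on A mul (A \<times> A)"
  using assms unfolding congruence_on_def equiv_def refl_on_def sym_def trans_def by blast

lemma commutator_props:
  assumes cl: "\<forall>a\<in>A. \<forall>b\<in>A. mul a b \<in> A" and sub: "\<forall>j<n. al j \<subseteq> A \<times> A"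
  shows "congruence_on A mul (commutator A mul al n)" "comm_closed mul al n (commutator A mul al n)"
proof -
  let ?F = "{\<delta>. congruence_on A mul \<delta> \<and> comm_closed mul al n \<delta>}"
  have "comm_closed mul al n (A \<times> A)"
    unfolding comm_closed_def using Mset_vals[OF _ sub cl] by blast
  then have "A \<times> A \<in> ?F" using full_cong[OF cl] by blast
  then show "congruence_on A mul (commutator A mul al n)"
    unfolding commutator_def by (intro cong_Inter) auto
  show "comm_closed mul al n (commutator A mul al n)"
    unfolding commutator_def by (intro cc_Inter) auto
qed

lemma ccD:
  assumes "comm_closed mul al n \<delta>" "g \<in> Mset mul al n"
    "\<And>x. length x = n - 1 \<Longrightarrow> x \<noteq> replicate (n - 1) True \<Longrightarrow> (g (x @ [False]), g (x @ [True])) \<in> \<delta>"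
  shows "(g (replicate (n - 1) True @ [False]), g (replicate (n - 1) True @ [True])) \<in> \<delta>"
  using assms unfolding comm_closed_def by blast

lemma commutator_least:
  "congruence_on A mul \<delta> \<Longrightarrow> comm_closed mul al n \<delta> \<Longrightarrow> commutator A mul al n \<subseteq> \<delta>"
  unfolding commutator_def by blast

lemma Cg_props:
  assumes cl: "\<forall>a\<in>A. \<forall>b\<in>A. mul a b \<in> A" and sub: "R \<subseteq> A \<times> A"
  shows "congruence_on A mul (Cg A mul R)" "R \<subseteq> Cg A mul R"
proof -
  have "A \<times> A \<in> {\<theta>. congruence_on A mul \<theta> \<and> R \<subseteq> \<theta>}" using full_cong[OF cl] sub by blast
  then show "congruence_on A mul (Cg A mul R)" unfolding Cg_def by (intro cong_Inter) auto
  show "R \<subseteq> Cg A mul R" unfolding Cg_def by blast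
qed

lemma Cg_least: "congruence_on A mul \<theta> \<Longrightarrow> R \<subseteq> \<theta> \<Longrightarrow> Cg A mul R \<subseteq> \<theta>"
  unfolding Cg_def by blast

theorem lemma2p2:
  fixes S I :: "'a set" and mul :: "'a \<Rightarrow> 'a \<Rightarrow> 'a"
    and al :: "nat \<Rightarrow> 'a rel" and n :: nat
  assumes "semigroup_on S mul"
    and "ideal_on S mul I"
    and "n \<ge> 1"
    and "\<forall>j<n. congruence_on S mul (al j)"
    and "\<forall>j<n. al j \<subseteq> rees S I"
  shows "commutator S mul al n = Cg S mul (commutator I mul (\<lambda>j. al j \<inter> (I \<times> I)) n)"
proof -
  define alI where "alI = (\<lambda>j. al j \<inter> (I \<times> I))"
  define C where "C = commutator S mul al n"
  define D where "D = commutator I mul alI n"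
  have clS: "\<forall>a\<in>S. \<forall>b\<in>S. mul a b \<in> S" and assoc: "\<And>a b c. a \<in> S \<Longrightarrow> b \<in> S \<Longrightarrow> c \<in> S \<Longrightarrow> mul (mul a b) c = mul a (mul b c)"
    using assms(1) unfolding semigroup_on_def by auto
  have IS: "I \<subseteq> S" and idl: "\<And>s i. s \<in> S \<Longrightarrow> i \<in> I \<Longrightarrow> mul s i \<in> I \<and> mul i s \<in> I"
    using assms(2) unfolding ideal_on_def by auto
  have clI: "\<forall>a\<in>I. \<forall>b\<in>I. mul a b \<in> I" using IS idl by blast
  have subS: "\<forall>j<n. al j \<subseteq> S \<times> S" using assms(4) cong_sub by blast
  have subI: "\<forall>j<n. alI j \<subseteq> I \<times> I" unfolding alI_def by blast
  have rees: "\<And>j a b. j < n \<Longrightarrow> (a, b) \<in> al j \<Longrightarrow> (a \<in> I \<and> b \<in> I) \<or> (a = b \<and> a \<in> S)"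
    using assms(5) unfolding rees_def Id_on_def by blast
  have valI: "\<And>g x. g \<in> Mset mul alI n \<Longrightarrow> g x \<in> I" using Mset_vals[OF _ subI clI] by blast
  have valS: "\<And>g x. g \<in> Mset mul al n \<Longrightarrow> g x \<in> S" using Mset_vals[OF _ subS clS] by blast
  have CC: "congruence_on S mul C" "comm_closed mul al n C"
    unfolding C_def using commutator_props[OF clS subS] by auto
  have DC: "congruence_on I mul D" "comm_closed mul alI n D"
    unfolding D_def using commutator_props[OF clI subI] by auto
  have absL: "(\<lambda>x. mul c (h x)) \<in> Mset mul alI n" if "h \<in> Mset mul alI n" "c \<in> S" for h c
    using that(1)
  proof (induction rule: Mset.induct)
    case (gen i a b)
    have "(mul c a, mul c b) \<in> al i"
      using gen cong_comp[OF assms(4)[rule_format, OF gen(1)] cong_refl[OF assms(4)[rule_format, OF gen(1)] that(2)]]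
      unfolding alI_def by blast
    moreover have "mul c a \<in> I" "mul c b \<in> I" using gen idl that(2) unfolding alI_def by auto
    ultimately have "(mul c a, mul c b) \<in> alI i" unfolding alI_def by blast
    from Mset.gen[where al=alI and mul=mul, OF gen(1) this] show ?case by (simp add: if_distrib)
  next
    case (prod g h)
    have "(\<lambda>x. mul (mul c (g x)) (h x)) \<in> Mset mul alI n" by (rule Mset.prod[OF prod(3) prod(2)])
    moreover have "\<And>x. mul (mul c (g x)) (h x) = mul c (mul (g x) (h x))"
      using assoc that(2) valI prod(1,2) IS by blast
    ultimately show ?case by simp
  qed
  have absR: "(\<lambda>x. mul (h x) c) \<in> Mset mul alI n" if "h \<in> Mset mul alI n" "c \<in> S" for h c
    using that(1)
  proof (induction rule: Mset.induct)
    case (gen i a b)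
    have "(mul a c, mul b c) \<in> al i"
      using gen cong_comp[OF assms(4)[rule_format, OF gen(1)] _ cong_refl[OF assms(4)[rule_format, OF gen(1)] that(2)]]
      unfolding alI_def by blast
    moreover have "mul a c \<in> I" "mul b c \<in> I" using gen idl that(2) unfolding alI_def by auto
    ultimately have "(mul a c, mul b c) \<in> alI i" unfolding alI_def by blast
    from Mset.gen[where al=alI and mul=mul, OF gen(1) this]
    have "(\<lambda>x. if x ! i then mul b c else mul a c) \<in> Mset mul alI n" .
    moreover have "(\<lambda>x. mul (if x ! i then b else a) c) = (\<lambda>x. if x ! i then mul b c else mul a c)" by auto
    ultimately show ?case by simp
  next
    case (prod g h)
    have "(\<lambda>x. mul (g x) (mul (h x) c)) \<in> Mset mul alI n" by (rule Mset.prod[OF prod(1) prod(4)])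
    moreover have "\<And>x. mul (g x) (mul (h x) c) = mul (mul (g x) (h x)) c"
      using assoc that(2) valI prod(1,2) IS by (metis subsetD)
    ultimately show ?case by simp
  qed
  have dich: "(\<exists>c\<in>S. g = (\<lambda>x. c)) \<or> g \<in> Mset mul alI n" if "g \<in> Mset mul al n" for g
    using that
  proof (induction rule: Mset.induct)
    case (gen i a b)
    from rees[OF gen] show ?case
    proof
      assume "a \<in> I \<and> b \<in> I"
      then have "(a, b) \<in> alI i" using gen unfolding alI_def by blast
      from Mset.gen[where al=alI and mul=mul, OF gen(1) this] show ?case by blast
    next
      assume "a = b \<and> a \<in> S" then show ?case by auto
    qed
  next
    case (prod g h)
    show ?case
      using prod(3,4)
    proof (elim disjE)
      assume "\<exists>c\<in>S. g = (\<lambda>x. c)" "\<exists>c\<in>S. h = (\<lambda>x. c)"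
      then show ?case using clS by auto
    next
      assume "\<exists>c\<in>S. g = (\<lambda>x. c)" "h \<in> Mset mul alI n"
      then show ?case using absL by auto
    next
      assume "g \<in> Mset mul alI n" "\<exists>c\<in>S. h = (\<lambda>x. c)"
      then show ?case using absR by auto
    next
      assume "g \<in> Mset mul alI n" "h \<in> Mset mul alI n"
      then show ?case using Mset.prod by blast
    qed
  qed
  \<comment> \<open>D is closed under multiplication by S\<close>
  define D0 where "D0 = {(a, b). (a, b) \<in> D \<and> (\<forall>u\<in>S. (mul u a, mul u b) \<in> D) \<and> (\<forall>v\<in>S. (mul a v, mul b v) \<in> D)}"
  have D0cong: "congruence_on I mul D0"
  proof -
    have "D0 \<subseteq> D" unfolding D0_def by blast
    have "equiv I D0"
    proof (rule equivI)
      show "D0 \<subseteq> I \<times> I" unfolding D0_def using cong_sub[OF DC(1)] by blast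
      show "refl_on I D0" unfolding refl_on_def D0_def
        using cong_sub[OF DC(1)] cong_refl[OF DC(1)] idl by blast
      show "sym D0" unfolding sym_def D0_def using cong_sym[OF DC(1)] by blast
      show "trans D0" unfolding trans_def D0_def using cong_trans[OF DC(1)] by blast
    qed
    moreover have "(mul a c, mul b d) \<in> D0" if ab: "(a, b) \<in> D0" and cd: "(c, d) \<in> D0" for a b c d
    proof -
      have abD: "(a, b) \<in> D" and cdD: "(c, d) \<in> D" using ab cd unfolding D0_def by auto
      have I4: "a \<in> I" "b \<in> I" "c \<in> I" "d \<in> I" using abD cdD cong_sub[OF DC(1)] by auto
      have "(mul a c, mul b d) \<in> D" using cong_comp[OF DC(1) abD cdD] .
      moreover have "(mul u (mul a c), mul u (mul b d)) \<in> D" if u: "u \<in> S" for u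
      proof -
        have "(mul u a, mul u b) \<in> D" using ab u unfolding D0_def by auto
        from cong_comp[OF DC(1) this cdD] show ?thesis using assoc u I4 IS by (metis subsetD)
      qed
      moreover have "(mul (mul a c) v, mul (mul b d) v) \<in> D" if v: "v \<in> S" for v
      proof -
        have "(mul c v, mul d v) \<in> D" using cd v unfolding D0_def by auto
        from cong_comp[OF DC(1) abD this] show ?thesis using assoc v I4 IS by (metis subsetD)
      qed
      ultimately show ?thesis unfolding D0_def by blast
    qed
    ultimately show ?thesis unfolding congruence_on_def by blast
  qed
  have D0cc: "comm_closed mul alI n D0"
    unfolding comm_closed_def
  proof (intro ballI impI)
    fix g assume g: "g \<in> Mset mul alI n"
      and pr: "\<forall>x. length x = n - 1 \<and> x \<noteq> replicate (n - 1) True \<longrightarrow> (g (x @ [False]), g (x @ [True])) \<in> D0"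
    let ?o = "replicate (n - 1) True"
    have "(g (?o @ [False]), g (?o @ [True])) \<in> D"
      using DC(2) g pr unfolding comm_closed_def D0_def by blast
    moreover have "(mul u (g (?o @ [False])), mul u (g (?o @ [True]))) \<in> D" if u: "u \<in> S" for u
      using ccD[OF DC(2) absL[OF g u]] pr u unfolding D0_def by auto
    moreover have "(mul (g (?o @ [False])) v, mul (g (?o @ [True])) v) \<in> D" if v: "v \<in> S" for v
      using ccD[OF DC(2) absR[OF g v]] pr v unfolding D0_def by auto
    ultimately show "(g (?o @ [False]), g (?o @ [True])) \<in> D0" unfolding D0_def by blast
  qed
  have DD0: "D \<subseteq> D0" unfolding D_def using commutator_least[OF D0cong D0cc] .
  define E' where "E' = D \<union> Id_on S"
  have E'cong: "congruence_on S mul E'"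
  proof -
    have Dsub: "D \<subseteq> I \<times> I" using cong_sub[OF DC(1)] .
    have "equiv S E'"
    proof (rule equivI)
      show "E' \<subseteq> S \<times> S" unfolding E'_def using Dsub IS by blast
      show "refl_on S E'" unfolding refl_on_def E'_def using Dsub IS by blast
      show "sym E'" unfolding sym_def E'_def using cong_sym[OF DC(1)] by blast
      show "trans E'" unfolding trans_def E'_def using cong_trans[OF DC(1)] by blast
    qed
    moreover have "(mul a c, mul b d) \<in> E'" if ab: "(a, b) \<in> E'" and cd: "(c, d) \<in> E'" for a b c d
    proof -
      { assume "(a, b) \<in> D" "(c, d) \<in> D" then have ?thesis using cong_comp[OF DC(1)] unfolding E'_def by blast }
      moreover
      { assume "(a, b) \<in> D" "c = d" "c \<in> S" then have ?thesis using DD0 unfolding E'_def D0_def by blast }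
      moreover
      { assume "a = b" "a \<in> S" "(c, d) \<in> D" then have ?thesis using DD0 unfolding E'_def D0_def by blast }
      moreover
      { assume "a = b" "a \<in> S" "c = d" "c \<in> S" then have ?thesis using clS unfolding E'_def by blast }
      ultimately show ?thesis using ab cd unfolding E'_def Id_on_def by blast
    qed
    ultimately show ?thesis unfolding congruence_on_def by blast
  qed
  have E'cc: "comm_closed mul al n E'"
    unfolding comm_closed_def
  proof (intro ballI impI)
    fix g assume g: "g \<in> Mset mul al n"
      and pr: "\<forall>x. length x = n - 1 \<and> x \<noteq> replicate (n - 1) True \<longrightarrow> (g (x @ [False]), g (x @ [True])) \<in> E'"
    let ?o = "replicate (n - 1) True"
    from dich[OF g] show "(g (?o @ [False]), g (?o @ [True])) \<in> E'"
    proof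
      assume "\<exists>c\<in>S. g = (\<lambda>x. c)" then show ?thesis unfolding E'_def by auto
    next
      assume gI: "g \<in> Mset mul alI n"
      have "\<forall>x. length x = n - 1 \<and> x \<noteq> ?o \<longrightarrow> (g (x @ [False]), g (x @ [True])) \<in> D"
      proof (intro allI impI)
        fix x assume "length x = n - 1 \<and> x \<noteq> ?o"
        then have "(g (x @ [False]), g (x @ [True])) \<in> E'" using pr by blast
        then show "(g (x @ [False]), g (x @ [True])) \<in> D"
          unfolding E'_def using cong_refl[OF DC(1)] valI[OF gI] by auto
      qed
      then show ?thesis using DC(2) gI unfolding comm_closed_def E'_def by blast
    qed
  qed
  have CE': "C \<subseteq> E'" unfolding C_def using commutator_least[OF E'cong E'cc] .
  have DsubS: "D \<subseteq> S \<times> S" using cong_sub[OF DC(1)] IS by blast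
  have Eprops: "congruence_on S mul (Cg S mul D)" "D \<subseteq> Cg S mul D" using Cg_props[OF clS DsubS] by auto
  have E'E: "E' \<subseteq> Cg S mul D" unfolding E'_def using Eprops cong_refl[OF Eprops(1)] by auto
  have CI: "congruence_on I mul (C \<inter> (I \<times> I))"
  proof -
    have "equiv I (C \<inter> (I \<times> I))"
    proof (rule equivI)
      show "C \<inter> (I \<times> I) \<subseteq> I \<times> I" by blast
      show "refl_on I (C \<inter> (I \<times> I))" unfolding refl_on_def using cong_refl[OF CC(1)] IS by blast
      show "sym (C \<inter> (I \<times> I))" unfolding sym_def using cong_sym[OF CC(1)] by blast
      show "trans (C \<inter> (I \<times> I))" unfolding trans_def using cong_trans[OF CC(1)] by blast
    qed
    then show ?thesis unfolding congruence_on_def using cong_comp[OF CC(1)] clI by blast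
  qed
  have MsubM: "g \<in> Mset mul al n" if "g \<in> Mset mul alI n" for g
    using that by (induction rule: Mset.induct) (auto simp: alI_def intro: Mset.intros)
  have CIcc: "comm_closed mul alI n (C \<inter> (I \<times> I))"
    unfolding comm_closed_def
  proof (intro ballI impI)
    fix g assume g: "g \<in> Mset mul alI n"
      and pr: "\<forall>x. length x = n - 1 \<and> x \<noteq> replicate (n - 1) True \<longrightarrow> (g (x @ [False]), g (x @ [True])) \<in> C \<inter> (I \<times> I)"
    let ?o = "replicate (n - 1) True"
    have "(g (?o @ [False]), g (?o @ [True])) \<in> C"
      using CC(2) MsubM[OF g] pr unfolding comm_closed_def by blast
    then show "(g (?o @ [False]), g (?o @ [True])) \<in> C \<inter> (I \<times> I)" using valI[OF g] by blast
  qed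
  have "D \<subseteq> C" unfolding D_def using commutator_least[OF CI CIcc] by blast
  then have "Cg S mul D \<subseteq> C" using Cg_least[OF CC(1)] by blast
  with CE' E'E have "C = Cg S mul D" by blast
  then show ?thesis unfolding C_def D_def alI_def .
qed

end
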